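(* Let $f=\frac{1}{m}\sum_{i=1}^m f^i$ where each $f^i:\mathbb{R}^n\to\mathbb{R}$ is differentiable. For $1\le k\le m$ let $G_k=\frac{1}{k}\sum_{j=1}^k\nabla f^{i_j}$ be the mini-batch estimator of size $k$, where $\{i_1,\dots,i_k\}$ is a $k$-element subset of $\{1,\dots,m\}$ chosen uniformly at random. Let $\|\cdot\|$ be any norm on $\mathbb{R}^n$ and fix $x\in\mathbb{R}^n$. Then $\mathbb{E}[\|G_k(x)\|]$ is non-increasing in $k$, and for $1\le k\le m-1$, $$\mathbb{E}[\|G_k(x)\|]\le\frac{m}{k}\|\nabla f(x)\|+\frac{m-k}{k}\,\mathbb{E}[\|G_{m-k}(x)\|].$$ *)

theory Defs
  imports "HOL-Analysis.Analysis" "HOL-Probability.Probability"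
begin

definition is_norm :: "('a::real_vector \<Rightarrow> real) \<Rightarrow> bool" where
  "is_norm N \<longleftrightarrow> (\<forall>x y. N (x + y) \<le> N x + N y) \<and>
                  (\<forall>c x. N (c *\<^sub>R x) = \<bar>c\<bar> * N x) \<and>
                  (\<forall>x. N x = 0 \<longleftrightarrow> x = 0)"

definition grad :: "(real^'n \<Rightarrow> real) \<Rightarrow> real^'n \<Rightarrow> real^'n" where
  "grad g x = (SOME v. (g has_derivative (\<lambda>h. v \<bullet> h)) (at x))"

definition minibatch :: "(nat \<Rightarrow> real^'n \<Rightarrow> real) \<Rightarrow> nat set \<Rightarrow> real^'n \<Rightarrow> real^'n" where
  "minibatch f S x = (1 / real (card S)) *\<^sub>R (\<Sum>i\<in>S. grad (f i) x)"

definition batches :: "nat \<Rightarrow> nat \<Rightarrow> nat set pmf" where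
  "batches m k = pmf_of_set {S. S \<subseteq> {1..m} \<and> card S = k}"

definition expected_norm_Gk ::
  "(real^'n \<Rightarrow> real) \<Rightarrow> (nat \<Rightarrow> real^'n \<Rightarrow> real) \<Rightarrow> nat \<Rightarrow> nat \<Rightarrow> real^'n \<Rightarrow> real" where
  "expected_norm_Gk N f m k x = measure_pmf.expectation (batches m k) (\<lambda>S. N (minibatch f S x))"

end

theory Submission
  imports Defs
begin


definition ks :: "nat \<Rightarrow> nat \<Rightarrow> nat set set" where
  "ks m k = {S. S \<subseteq> {1..m} \<and> card S = k}"

definition Gm :: "(nat \<Rightarrow> 'a::real_vector) \<Rightarrow> nat set \<Rightarrow> 'a" where
  "Gm g S = (1 / real (card S)) *\<^sub>R (\<Sum>i\<in>S. g i)"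

lemma ks_finite: "finite (ks m k)"
  unfolding ks_def by (rule finite_subset[of _ "Pow {1..m}"]) auto

lemma ks_card: "card (ks m k) = m choose k"
  unfolding ks_def using n_subsets[of "{1..m}" k] by simp

lemma ks_ne: "k \<le> m \<Longrightarrow> ks m k \<noteq> {}"
proof -
  assume "k \<le> m"
  then have "{1..k} \<in> ks m k" unfolding ks_def by auto
  then show ?thesis by auto
qed

lemma ks_mem_finite: "S \<in> ks m k \<Longrightarrow> finite S"
  unfolding ks_def using finite_subset by auto

lemma norm_props:
  assumes "is_norm N"
  shows N0: "N 0 = 0" and Nneg: "N (- v) = N v" and Ntri: "N (a + b) \<le> N a + N b"
    and Nscale: "N (c *\<^sub>R v) = \<bar>c\<bar> * N v"
proof -
  show "N 0 = 0" using assms unfolding is_norm_def by auto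
  show "N (- v) = N v" using assms unfolding is_norm_def
    by (metis abs_minus_cancel abs_one mult_1 scaleR_minus1_left)
  show "N (a + b) \<le> N a + N b" using assms unfolding is_norm_def by auto
  show "N (c *\<^sub>R v) = \<bar>c\<bar> * N v" using assms unfolding is_norm_def by auto
qed

lemma Nsum:
  assumes "is_norm N"
  shows "N (sum v A) \<le> (\<Sum>i\<in>A. N (v i))"
proof (induction A rule: infinite_finite_induct)
  case (infinite A) then show ?case using N0[OF assms] by simp
next
  case empty then show ?case using N0[OF assms] by simp
next
  case (insert a A)
  then show ?case using Ntri[OF assms, of "v a" "sum v A"] by simp
qed

lemma expect_eq:
  assumes "k \<le> m"
  shows "expected_norm_Gk N f m k x = (\<Sum>S\<in>ks m k. N (Gm (\<lambda>i. grad (f i) x) S)) / real (m choose k)"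
proof -
  have "batches m k = pmf_of_set (ks m k)" unfolding batches_def ks_def by simp
  then show ?thesis
    unfolding expected_norm_Gk_def
    using integral_pmf_of_set[OF ks_ne[OF assms] ks_finite, of "\<lambda>S. N (minibatch f S x)"]
    by (simp add: ks_card minibatch_def Gm_def)
qed

lemma split_T:
  assumes "finite T" "card T = k + 1" "k \<ge> 1"
  shows "Gm g T = (1 / real (k + 1)) *\<^sub>R (\<Sum>j\<in>T. Gm g (T - {j}))"
proof -
  have c: "card (T - {j}) = k" if "j \<in> T" for j using assms that by simp
  have r: "(\<Sum>i\<in>T - {j}. g i) = (\<Sum>i\<in>T. g i) - g j" if "j \<in> T" for j
    using sum.remove[OF assms(1) that, of g] by (simp add: algebra_simps)
  have "(\<Sum>j\<in>T. Gm g (T - {j})) = (\<Sum>j\<in>T. (1 / real k) *\<^sub>R ((\<Sum>i\<in>T. g i) - g j))"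
    by (rule sum.cong[OF refl]) (simp add: Gm_def r assms(2))
  also have "\<dots> = (1 / real k) *\<^sub>R (real (k+1) *\<^sub>R (\<Sum>i\<in>T. g i) - (\<Sum>i\<in>T. g i))"
    by (simp add: scaleR_sum_right[symmetric] sum_subtractf assms(2) sum_constant_scaleR)
  also have "\<dots> = (\<Sum>i\<in>T. g i)"
    using assms(3) by (simp add: algebra_simps)
  finally show ?thesis using assms by (simp add: Gm_def)
qed

lemma double_count:
  assumes "k < m"
  shows "(\<Sum>T\<in>ks m (k+1). \<Sum>j\<in>T. h (T - {j})) = (\<Sum>S\<in>ks m k. real (m - k) * h S)"
proof -
  have fin: "\<forall>T\<in>ks m (k+1). finite T" using ks_mem_finite by blast
  have fin2: "\<forall>S\<in>ks m k. finite ({1..m} - S)" by auto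
  have L: "(\<Sum>T\<in>ks m (k+1). \<Sum>j\<in>T. h (T - {j})) = (\<Sum>(T,j)\<in>Sigma (ks m (k+1)) (\<lambda>T. T). h (T - {j}))"
    by (rule sum.Sigma[OF ks_finite fin])
  have cS: "card ({1..m} - S) = m - k" if "S \<in> ks m k" for S
    using that unfolding ks_def by (simp add: card_Diff_subset ks_mem_finite[OF that])
  have "(\<Sum>S\<in>ks m k. real (m - k) * h S) = (\<Sum>S\<in>ks m k. \<Sum>j\<in>{1..m} - S. h S)"
    by (rule sum.cong[OF refl]) (simp only: sum_constant cS)
  also have "\<dots> = (\<Sum>(S,j)\<in>Sigma (ks m k) (\<lambda>S. {1..m} - S). h S)"
    by (rule sum.Sigma[OF ks_finite fin2])
  finally have R: "(\<Sum>S\<in>ks m k. real (m - k) * h S) = (\<Sum>(S,j)\<in>Sigma (ks m k) (\<lambda>S. {1..m} - S). h S)" .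
  have i1: "T - {j} \<in> ks m k" "Suc 0 \<le> j" "j \<le> m" if "T \<in> ks m (Suc k)" "j \<in> T" for T j
    using that unfolding ks_def using ks_mem_finite[OF that(1)] by auto
  have i2: "insert j S \<in> ks m (Suc k)" if "S \<in> ks m k" "Suc 0 \<le> j" "j \<le> m" "j \<notin> S" for S j
    using that unfolding ks_def using ks_mem_finite[OF that(1)] by auto
  have bij: "bij_betw (\<lambda>(T,j). (T - {j}, j)) (Sigma (ks m (k+1)) (\<lambda>T. T)) (Sigma (ks m k) (\<lambda>S. {1..m} - S))"
    by (rule bij_betw_byWitness[where f'="\<lambda>(S,j). (insert j S, j)"]) (auto simp: i1 i2)
  have "(\<Sum>(T,j)\<in>Sigma (ks m (k+1)) (\<lambda>T. T). h (T - {j})) = (\<Sum>(S,j)\<in>Sigma (ks m k) (\<lambda>S. {1..m} - S). h S)"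
    using sum.reindex_bij_betw[OF bij, of "\<lambda>(S,j). h S"] by (simp add: case_prod_beta)
  then show ?thesis using L R by simp
qed

lemma step_sum:
  assumes "is_norm N" "1 \<le> k" "k < m"
  shows "(\<Sum>T\<in>ks m (k+1). N (Gm g T)) * real (k+1) \<le> real (m - k) * (\<Sum>S\<in>ks m k. N (Gm g S))"
proof -
  have "N (Gm g T) * real (k+1) \<le> (\<Sum>j\<in>T. N (Gm g (T - {j})))" if "T \<in> ks m (k+1)" for T
  proof -
    have ct: "card T = k + 1" using that unfolding ks_def by auto
    have "N (Gm g T) = (1 / real (k+1)) * N (\<Sum>j\<in>T. Gm g (T - {j}))"
      using split_T[OF ks_mem_finite[OF that] ct assms(2), of g] Nscale[OF assms(1)] by simp
    also have "\<dots> \<le> (1 / real (k+1)) * (\<Sum>j\<in>T. N (Gm g (T - {j})))"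
      by (rule mult_left_mono[OF Nsum[OF assms(1)]]) simp
    finally show ?thesis by (simp add: field_simps)
  qed
  then have "(\<Sum>T\<in>ks m (k+1). N (Gm g T) * real (k+1)) \<le> (\<Sum>T\<in>ks m (k+1). \<Sum>j\<in>T. N (Gm g (T - {j})))"
    by (rule sum_mono)
  also have "\<dots> = (\<Sum>S\<in>ks m k. real (m - k) * N (Gm g S))"
    by (rule double_count[OF assms(3)])
  finally show ?thesis by (simp add: sum_distrib_left sum_distrib_right)
qed

lemma binom_rel: "k < m \<Longrightarrow> real (k+1) * real (m choose (k+1)) = real (m - k) * real (m choose k)"
proof -
  assume "k < m"
  then obtain n where n: "m = Suc n" by (cases m) auto
  have "Suc k * (Suc n choose Suc k) = Suc n * (n choose k)" by (rule Suc_times_binomial)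
  moreover have "(m - k) * (m choose k) = m * ((m - 1) choose k)" by (rule binomial_absorb_comp)
  ultimately have "(k+1) * (m choose (k+1)) = (m - k) * (m choose k)" using n by simp
  then show ?thesis by (metis of_nat_mult)
qed

lemma E_step:
  assumes "is_norm N" "1 \<le> k" "k < m"
  shows "(\<Sum>T\<in>ks m (k+1). N (Gm g T)) / real (m choose (k+1)) \<le> (\<Sum>S\<in>ks m k. N (Gm g S)) / real (m choose k)"
proof -
  define a where "a = (\<Sum>T\<in>ks m (k+1). N (Gm g T))"
  define b where "b = (\<Sum>S\<in>ks m k. N (Gm g S))"
  define c1 where "c1 = real (m choose (k+1))"
  define c0 where "c0 = real (m choose k)"
  have c1p: "c1 > 0" unfolding c1_def using assms by simp
  have c0p: "c0 > 0" unfolding c0_def using assms by simp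
  have rel: "real (k+1) * c1 = real (m - k) * c0" unfolding c1_def c0_def by (rule binom_rel[OF assms(3)])
  have ab: "a * real (k+1) \<le> real (m - k) * b" unfolding a_def b_def by (rule step_sum[OF assms])
  have "a * c0 * real (k+1) \<le> b * c1 * real (k+1)"
  proof -
    have "a * c0 * real (k+1) = (a * real (k+1)) * c0" by simp
    also have "\<dots> \<le> (real (m - k) * b) * c0" using ab c0p by (intro mult_right_mono) auto
    also have "\<dots> = b * (real (m - k) * c0)" by simp
    also have "\<dots> = b * (real (k+1) * c1)" by (simp only: rel)
    also have "\<dots> = b * c1 * real (k+1)" by simp
    finally show ?thesis .
  qed
  then have "a * c0 \<le> b * c1" by (simp del: of_nat_add)
  then show ?thesis using c0p c1p unfolding a_def[symmetric] b_def[symmetric] c0_def[symmetric] c1_def[symmetric]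
    by (simp add: divide_le_eq le_divide_eq field_simps)
qed

lemma comp_bound:
  assumes "is_norm N" "1 \<le> k" "k < m" "S \<in> ks m k"
  shows "N (Gm g S) \<le> real m / real k * N ((1 / real m) *\<^sub>R (\<Sum>i=1..m. g i))
           + real (m - k) / real k * N (Gm g ({1..m} - S))"
proof -
  define C where "C = {1..m} - S"
  define F where "F = (1 / real m) *\<^sub>R (\<Sum>i=1..m. g i)"
  have Ssub: "S \<subseteq> {1..m}" and cS: "card S = k" using assms(4) unfolding ks_def by auto
  have cC: "card C = m - k" unfolding C_def using Ssub cS by (simp add: card_Diff_subset ks_mem_finite[OF assms(4)])
  have split: "(\<Sum>i=1..m. g i) = (\<Sum>i\<in>C. g i) + (\<Sum>i\<in>S. g i)"
    unfolding C_def by (rule sum.subset_diff[OF Ssub]) simp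
  have all: "(\<Sum>i=1..m. g i) = real m *\<^sub>R F" unfolding F_def using assms by simp
  have sc: "(\<Sum>i\<in>C. g i) = real (m - k) *\<^sub>R Gm g C" unfolding Gm_def cC using assms by simp
  have gs: "Gm g S = (1 / real k) *\<^sub>R (\<Sum>i\<in>S. g i)" unfolding Gm_def cS ..
  have ss: "(\<Sum>i\<in>S. g i) = real m *\<^sub>R F - real (m - k) *\<^sub>R Gm g C"
    using split all sc by (simp add: algebra_simps)
  have "Gm g S = (1 / real k) *\<^sub>R (real m *\<^sub>R F - real (m - k) *\<^sub>R Gm g C)"
    unfolding gs ss ..
  also have "\<dots> = (real m / real k) *\<^sub>R F + - ((real (m - k) / real k) *\<^sub>R Gm g C)"
    by (simp add: algebra_simps)
  finally have e: "Gm g S = (real m / real k) *\<^sub>R F + - ((real (m - k) / real k) *\<^sub>R Gm g C)" .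
  have "N (Gm g S) \<le> N ((real m / real k) *\<^sub>R F) + N (- ((real (m - k) / real k) *\<^sub>R Gm g C))"
    unfolding e by (rule Ntri[OF assms(1)])
  also have "\<dots> = real m / real k * N F + real (m - k) / real k * N (Gm g C)"
    by (simp add: Nneg[OF assms(1)] Nscale[OF assms(1)])
  finally show ?thesis unfolding C_def F_def .
qed

lemma comp_bij: "k \<le> m \<Longrightarrow> bij_betw (\<lambda>S. {1..m} - S) (ks m k) (ks m (m - k))"
proof -
  assume km: "k \<le> m"
  have a: "{1..m} - S \<in> ks m (m - k)" if "S \<in> ks m k" for S
    using that unfolding ks_def by (auto simp: card_Diff_subset ks_mem_finite[OF that])
  have b: "{1..m} - S \<in> ks m k" if "S \<in> ks m (m - k)" for S
    using that km unfolding ks_def by (auto simp: card_Diff_subset ks_mem_finite[OF that])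
  have c: "{1..m} - ({1..m} - S) = S" if "S \<in> ks m j" for S j using that unfolding ks_def by auto
  show ?thesis
  proof (rule bij_betw_byWitness[where f'="\<lambda>S. {1..m} - S"])
    show "\<forall>S\<in>ks m k. {1..m} - ({1..m} - S) = S" using c by blast
    show "\<forall>S\<in>ks m (m - k). {1..m} - ({1..m} - S) = S" using c by blast
    show "(\<lambda>S. {1..m} - S) ` ks m k \<subseteq> ks m (m - k)" using a by blast
    show "(\<lambda>S. {1..m} - S) ` ks m (m - k) \<subseteq> ks m k" using b by blast
  qed
qed

lemma part2:
  assumes "is_norm N" "1 \<le> k" "k < m"
  shows "(\<Sum>S\<in>ks m k. N (Gm g S)) / real (m choose k) \<le> real m / real k * N ((1 / real m) *\<^sub>R (\<Sum>i=1..m. g i))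
           + real (m - k) / real k * ((\<Sum>S\<in>ks m (m - k). N (Gm g S)) / real (m choose (m - k)))"
proof -
  define F where "F = N ((1 / real m) *\<^sub>R (\<Sum>i=1..m. g i))"
  define c where "c = real (m choose k)"
  have cp: "c > 0" unfolding c_def using assms by simp
  have cc: "real (m choose (m - k)) = c" unfolding c_def using assms binomial_symmetric[of k m] by simp
  have "(\<Sum>S\<in>ks m k. N (Gm g S)) \<le> (\<Sum>S\<in>ks m k. real m / real k * F + real (m - k) / real k * N (Gm g ({1..m} - S)))"
    by (rule sum_mono) (use comp_bound[OF assms] in \<open>simp add: F_def\<close>)
  also have "\<dots> = c * (real m / real k * F) + real (m - k) / real k * (\<Sum>S\<in>ks m k. N (Gm g ({1..m} - S)))"
    by (simp add: sum.distrib sum_distrib_left c_def ks_card)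
  also have "(\<Sum>S\<in>ks m k. N (Gm g ({1..m} - S))) = (\<Sum>S\<in>ks m (m - k). N (Gm g S))"
    using sum.reindex_bij_betw[OF comp_bij, of k m "\<lambda>S. N (Gm g S)"] assms by simp
  finally have "(\<Sum>S\<in>ks m k. N (Gm g S)) \<le> c * (real m / real k * F) + real (m - k) / real k * (\<Sum>S\<in>ks m (m - k). N (Gm g S))" .
  then show ?thesis unfolding cc F_def[symmetric] c_def[symmetric] using cp
    by (simp add: divide_le_eq field_simps)
qed


lemma grad_ok:
  fixes g :: "real^'n \<Rightarrow> real"
  assumes "g differentiable (at x)"
  shows "(g has_derivative (\<lambda>h. grad g x \<bullet> h)) (at x)"
proof -
  obtain D where D: "(g has_derivative D) (at x)" using assms unfolding differentiable_def by blast
  have lin: "linear D" using has_derivative_linear[OF D] .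
  define v where "v = (\<Sum>b\<in>Basis. D b *\<^sub>R b)"
  have "D = (\<lambda>h. v \<bullet> h)"
  proof
    fix h
    have "D h = D (\<Sum>b\<in>Basis. (h \<bullet> b) *\<^sub>R b)" by (simp add: euclidean_representation)
    also have "\<dots> = (\<Sum>b\<in>Basis. (h \<bullet> b) * D b)"
      using lin by (simp add: linear_sum linear_scale)
    also have "\<dots> = v \<bullet> h" by (simp add: v_def inner_sum_right inner_commute mult.commute)
    finally show "D h = v \<bullet> h" .
  qed
  then have "\<exists>v. (g has_derivative (\<lambda>h. v \<bullet> h)) (at x)" using D by blast
  then show ?thesis unfolding grad_def by (rule someI_ex)
qed

lemma grad_unique:
  fixes g :: "real^'n \<Rightarrow> real"
  assumes "(g has_derivative (\<lambda>h. v \<bullet> h)) (at x)"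
  shows "grad g x = v"
proof -
  have "g differentiable (at x)" using assms unfolding differentiable_def by blast
  then have "(\<lambda>h. grad g x \<bullet> h) = (\<lambda>h. v \<bullet> h)"
    using has_derivative_unique[OF grad_ok assms] by blast
  then have "grad g x \<bullet> (grad g x - v) = v \<bullet> (grad g x - v)" by metis
  then have "(grad g x - v) \<bullet> (grad g x - v) = 0" by (simp add: inner_diff_left)
  then show ?thesis by simp
qed

lemma grad_avg:
  fixes f :: "nat \<Rightarrow> real^'n \<Rightarrow> real"
  assumes "\<And>i y. i \<in> {1..m} \<Longrightarrow> f i differentiable (at y)"
  shows "grad (\<lambda>y. (1 / real m) * (\<Sum>i=1..m. f i y)) x = (1 / real m) *\<^sub>R (\<Sum>i=1..m. grad (f i) x)"
proof (rule grad_unique)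
  have "((\<lambda>y. \<Sum>i=1..m. f i y) has_derivative (\<lambda>h. \<Sum>i=1..m. grad (f i) x \<bullet> h)) (at x)"
    by (rule has_derivative_sum) (rule grad_ok[OF assms], simp)
  then have "((\<lambda>y. (1 / real m) * (\<Sum>i=1..m. f i y)) has_derivative (\<lambda>h. (1 / real m) * (\<Sum>i=1..m. grad (f i) x \<bullet> h))) (at x)"
    by (rule has_derivative_mult_right)
  then show "((\<lambda>y. (1 / real m) * (\<Sum>i=1..m. f i y)) has_derivative (\<lambda>h. ((1 / real m) *\<^sub>R (\<Sum>i=1..m. grad (f i) x)) \<bullet> h)) (at x)"
    by (simp add: inner_sum_left)
qed

theorem theorem4p6:
  fixes f :: "nat \<Rightarrow> real^'n \<Rightarrow> real" and N :: "real^'n \<Rightarrow> real"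
    and m :: nat and x :: "real^'n"
  assumes "m \<ge> 1"
    and "\<And>i y. i \<in> {1..m} \<Longrightarrow> f i differentiable (at y)"
    and "is_norm N"
  shows "(\<forall>k k'. 1 \<le> k \<and> k \<le> k' \<and> k' \<le> m \<longrightarrow>
             expected_norm_Gk N f m k' x \<le> expected_norm_Gk N f m k x)
       \<and> (\<forall>k. 1 \<le> k \<and> k \<le> m - 1 \<longrightarrow>
             expected_norm_Gk N f m k x
               \<le> real m / real k * N (grad (\<lambda>y. (1 / real m) * (\<Sum>i=1..m. f i y)) x)
                 + real (m - k) / real k * expected_norm_Gk N f m (m - k) x)"
proof -
  define g where "g = (\<lambda>i. grad (f i) x)"
  have E: "expected_norm_Gk N f m k x = (\<Sum>S\<in>ks m k. N (Gm g S)) / real (m choose k)" if "k \<le> m" for k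
    using expect_eq[OF that] unfolding g_def .
  have stepE: "expected_norm_Gk N f m (Suc k) x \<le> expected_norm_Gk N f m k x" if "1 \<le> k" "k < m" for k
    using E_step[OF assms(3) that, of g] E[of k] E[of "Suc k"] that by simp
  have P1: "expected_norm_Gk N f m k' x \<le> expected_norm_Gk N f m k x"
    if "1 \<le> k" "k \<le> k'" "k' \<le> m" for k k'
    using that(2,3)
  proof (induction k' rule: dec_induct)
    case base then show ?case by simp
  next
    case (step j)
    then have "expected_norm_Gk N f m (Suc j) x \<le> expected_norm_Gk N f m j x"
      using stepE[of j] that(1) by simp
    then show ?case using step by simp
  qed
  have P2: "expected_norm_Gk N f m k x
               \<le> real m / real k * N (grad (\<lambda>y. (1 / real m) * (\<Sum>i=1..m. f i y)) x)
                 + real (m - k) / real k * expected_norm_Gk N f m (m - k) x"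
    if "1 \<le> k" "k \<le> m - 1" for k
  proof -
    have km: "k < m" using that by simp
    show ?thesis
      using part2[OF assms(3) that(1) km, of g] E[of k] E[of "m - k"] km
        grad_avg[OF assms(2), where x=x]
      unfolding g_def by simp
  qed
  show ?thesis using P1 P2 by blast
qed

end
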